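(* Let $n\ge4$, let $0<\alpha_2,\alpha_3<1$, $\alpha_1=1-\alpha_2-\alpha_3$, and $\lambda^*=\big(\frac{n-1+\alpha_1}{n},\frac{\alpha_2}{n},\frac{\alpha_3}{n}\big)$. Let $i_1$ be an integer with $0\le i_1\le n-4$ and $n-i_1$ even, and let $\mathfrak{p}(i_1)=|l_i(\lambda^* )|$ for $i=\big(i_1,\frac{n-i_1}{2},\frac{n-i_1}{2}\big)$. Then $$\mathfrak{p}(i_1)\le\frac{1}{e(\ln n-1)}\cdot\frac{\Gamma(n+1)}{i_1!\,\Gamma(n-i_1)}\cdot\frac{4\alpha_2(1-\alpha_2)}{(n-i_1)(n-i_1-1)}.$$
   Context: For an integer $n\ge1$ let $I=\{i=(i_1,i_2,i_3)\in\mathbb{Z}_+^3: i_1+i_2+i_3=n\}$ and $l_i(\lambda)=\prod_{s=1}^{3}\frac{1}{i_s!}\prod_{t=0}^{i_s-1}(n\lambda_s-t)$ for $\lambda=(\lambda_1,\lambda_2,\lambda_3)$ (Lagrange fundamental polynomials for the equally spaced nodes $i/n$ of a triangle in barycentric coordinates). *)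

theory Defs
  imports "HOL-Analysis.Analysis"
begin

definition lfac :: "nat \<Rightarrow> real \<Rightarrow> real" where
  "lfac k x = (1 / fact k) * (\<Prod>t<k. x - real t)"

text \<open>Lagrange fundamental polynomial l_i(lambda) for the equally spaced nodes i/n
  of a triangle, in barycentric coordinates lambda = (lambda_1, lambda_2, lambda_3),
  multi-index i = (i_1, i_2, i_3).\<close>
definition lagr :: "nat \<Rightarrow> nat \<times> nat \<times> nat \<Rightarrow> real \<times> real \<times> real \<Rightarrow> real" where
  "lagr n i lam = (case i of (i1, i2, i3) \<Rightarrow> case lam of (l1, l2, l3) \<Rightarrow>
      lfac i1 (real n * l1) * lfac i2 (real n * l2) * lfac i3 (real n * l3))"

end

theory Submission imports Defs begin

lemma prod_small:
  fixes a :: real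
  assumes "0 < a" "a < 1" "2 \<le> m"
  shows "\<bar>\<Prod>t<m. a - real t\<bar> \<le> a * (1 - a) * fact (m - 1)"
  using assms(3)
proof (induction m rule: dec_induct)
  case base
  then show ?case using assms by (simp add: numeral_2_eq_2 abs_mult)
next
  case (step k)
  have "\<bar>\<Prod>t<Suc k. a - real t\<bar> = \<bar>\<Prod>t<k. a - real t\<bar> * (real k - a)"
    using step assms by (simp add: abs_mult)
  also have "\<dots> \<le> a * (1 - a) * fact (k - 1) * real k"
    using step assms by (intro mult_mono) auto
  also have "\<dots> = a * (1 - a) * fact (Suc k - 1)"
    using step by (cases k) (auto simp: algebra_simps)
  finally show ?case .
qed

lemma lfac_small:
  fixes a :: real
  assumes "0 < a" "a < 1" "2 \<le> m"
  shows "\<bar>lfac m a\<bar> \<le> a * (1 - a) / real m"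
proof -
  have "\<bar>lfac m a\<bar> = \<bar>\<Prod>t<m. a - real t\<bar> / fact m"
    by (simp add: lfac_def abs_mult)
  also have "\<dots> \<le> a * (1 - a) * fact (m - 1) / fact m"
    using prod_small[OF assms] by (intro divide_right_mono) auto
  also have "fact m = real m * fact (m - 1)"
    using assms(3) by (cases m) auto
  also have "a * (1 - a) * fact (m - 1) / (real m * fact (m - 1)) = a * (1 - a) / real m"
    by simp
  finally show ?thesis .
qed

lemma step_ineq:
  fixes K x :: real
  assumes "1 \<le> K" "0 \<le> x"
  shows "1 - x / K \<le> (K / (K + 1)) powr x"
proof -
  have "1 - x / K \<le> exp (- x / K)" using exp_ge_add_one_self[of "-x/K"] by simp
  also have "- x / K \<le> x * ln (K / (K + 1))"
  proof -
    have "ln (1 + 1/K) \<le> 1 / K" using assms by (intro ln_add_one_self_le_self) auto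
    moreover have "ln (K / (K + 1)) = - ln (1 + 1/K)"
      using assms by (simp add: ln_div field_simps)
    ultimately have "ln (K / (K + 1)) \<ge> - 1/K" by simp
    from mult_left_mono[OF this assms(2)] show ?thesis by simp
  qed
  hence "exp (- x / K) \<le> exp (x * ln (K / (K + 1)))" by simp
  also have "\<dots> = (K / (K + 1)) powr x" using assms by (simp add: powr_def)
  finally show ?thesis by simp
qed

lemma Abound:
  fixes s x :: real and N i :: nat
  assumes "1 \<le> N" "0 \<le> x" "x \<le> s" "s < real N + 1"
  shows "0 \<le> (\<Prod>t<i. real (N + i) - s - real t) \<and>
    (\<Prod>t<i. real (N + i) - s - real t) \<le> fact (N + i) / fact N * ((real N + 1) / (real (N + i) + 1)) powr x"
proof (induction i)
  case 0 then show ?case by simp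
next
  case (Suc i)
  define P where "P = (\<Prod>t<i. real (N + i) - s - real t)"
  define K where "K = real (N + i) + 1"
  have eq: "(\<Prod>t<Suc i. real (N + Suc i) - s - real t) = (K - s) * P"
    unfolding P_def K_def by (subst prod.lessThan_Suc_shift) (simp add: algebra_simps)
  have P0: "0 \<le> P" and PB: "P \<le> fact (N + i) / fact N * ((real N + 1) / K) powr x"
    using Suc unfolding P_def K_def by auto
  have K1: "1 \<le> K" "K - s > 0" using assms unfolding K_def by auto
  have "(K - s) * P \<le> (K - x) * (fact (N + i) / fact N * ((real N + 1) / K) powr x)"
    using P0 PB K1 assms by (intro mult_mono) auto
  also have "K - x = K * (1 - x / K)" using K1 by (simp add: field_simps)
  also have "K * (1 - x / K) * (fact (N + i) / fact N * ((real N + 1) / K) powr x)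
     \<le> K * (K / (K + 1)) powr x * (fact (N + i) / fact N * ((real N + 1) / K) powr x)"
    using step_ineq[OF K1(1) assms(2)] K1 by (intro mult_right_mono mult_left_mono) auto
  also have "\<dots> = fact (N + Suc i) / fact N * ((real N + 1) / (real (N + Suc i) + 1)) powr x"
  proof -
    have "(K / (K + 1)) powr x * ((real N + 1) / K) powr x = ((real N + 1) / (K + 1)) powr x"
      using K1 by (simp add: powr_mult[symmetric])
    moreover have "fact (N + Suc i) = K * fact (N + i)" unfolding K_def by simp
    moreover have "real (N + Suc i) + 1 = K + 1" unfolding K_def by simp
    ultimately show ?thesis by (simp add: algebra_simps)
  qed
  finally show ?case using eq P0 K1 by simp
qed


lemma mono4:
  fixes a b c d a' b' c' d' :: real
  assumes "0 \<le> a" "a \<le> a'" "0 \<le> b" "b \<le> b'" "0 \<le> c" "c \<le> c'" "0 \<le> d" "d \<le> d'"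
  shows "a * b * c * d \<le> a' * b' * c' * d'"
proof -
  have "a * b \<le> a' * b'" using assms by (intro mult_mono) auto
  moreover have "0 \<le> a * b" using assms by simp
  ultimately have "a * b * c \<le> a' * b' * c'" using assms by (intro mult_mono) auto
  moreover have "0 \<le> a * b * c" using assms by simp
  ultimately show ?thesis using assms by (intro mult_mono) auto
qed

lemma key:
  fixes a :: real and n N :: nat
  assumes "4 \<le> N" "N \<le> n" "0 < a" "a < 1"
  shows "((real N + 1) / (real n + 1)) powr a * (a * (1 - a)) * (real N - 1) * exp 1 * (ln (real n) - 1)
         \<le> (real N)^2"
proof -
  define L where "L = ln ((real n + 1) / (real N + 1))"
  have L0: "0 \<le> L" unfolding L_def using assms by simp
  have rp: "((real N + 1) / (real n + 1)) powr a = exp (- (a * L))"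
    unfolding L_def using assms by (simp add: powr_def ln_div algebra_simps)
  have lnn: "ln (real n) - 1 \<le> L + real N - 1"
  proof -
    have "ln (real n) \<le> ln (real n + 1)" using assms by simp
    also have "\<dots> = L + ln (real N + 1)" unfolding L_def using assms by (simp add: ln_div)
    also have "ln (real N + 1) \<le> real N" using ln_le_minus_one[of "real N + 1"] by simp
    finally show ?thesis by simp
  qed
  have e3: "exp 1 \<le> (3::real)" by (rule exp_le)
  have ln4: "1 \<le> ln (real n)"
  proof -
    have "exp 1 \<le> real n" using e3 assms by simp
    hence "ln (exp 1) \<le> ln (real n)" using assms by (subst ln_le_cancel_iff) auto
    thus ?thesis by simp
  qed
  have aa: "a * (1 - a) \<le> 1/4"
  proof -
    have "0 \<le> (a - 1/2)^2" by simp
    thus ?thesis by (simp add: power2_eq_square algebra_simps)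
  qed
  have aa0: "0 \<le> a * (1 - a)" using assms by simp
  have N4: "real N \<ge> 4" using assms by simp
  show ?thesis
  proof (cases "L \<le> 1")
    case True
    have "exp (- (a * L)) \<le> 1" using L0 assms by simp
    hence K: "exp (- (a * L)) * (a * (1 - a)) \<le> 1 * (1/4)"
      using aa aa0 by (intro mult_mono) auto
    have lnN: "ln (real n) - 1 \<le> real N" using lnn True by simp
    have "exp (- (a * L)) * (a * (1 - a)) * (real N - 1) * exp 1 * (ln (real n) - 1)
       \<le> (1/4) * (real N - 1) * 3 * real N"
      using K lnN e3 ln4 N4 aa0
      by (intro mono4) auto
    also have "\<dots> \<le> (real N)^2" using N4 by (simp add: power2_eq_square algebra_simps)
    finally show ?thesis using rp by simp
  next
    case False
    have "exp 1 * (a * L) \<le> exp (a * L)"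
      using exp_ge_add_one_self[of "a * L - 1"] by (simp add: exp_diff field_simps)
    hence K: "exp (- (a * L)) * a * exp 1 * L \<le> 1"
      by (simp add: exp_minus field_simps)
    have "exp (- (a * L)) * (a * (1 - a)) * (real N - 1) * exp 1 * (ln (real n) - 1)
       \<le> exp (- (a * L)) * a * (real N - 1) * exp 1 * (L + real N - 1)"
      using lnn ln4 N4 assms aa0 by (intro mono4) auto
    also have "\<dots> = (exp (- (a * L)) * a * exp 1 * L) * ((real N - 1) * (L + real N - 1) / L)"
      using False by (simp add: field_simps)
    also have "\<dots> \<le> 1 * ((real N - 1) * (L + real N - 1) / L)"
      using K False N4 by (intro mult_right_mono) auto
    also have "(real N - 1) * (L + real N - 1) / L \<le> (real N - 1) * real N"
    proof -
      have "(L + real N - 1) / L \<le> real N"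
      proof -
        have "0 \<le> (real N - 1) * (L - 1)" using False N4 by simp
        hence "L + real N - 1 \<le> real N * L" by (simp add: algebra_simps)
        thus ?thesis using False by (simp add: divide_le_eq)
      qed
      thus ?thesis using N4 by (simp add: times_divide_eq_right[symmetric] mult_left_mono del: times_divide_eq_right)
    qed
    also have "\<dots> \<le> (real N)^2" by (simp add: power2_eq_square algebra_simps)
    finally show ?thesis using rp by simp
  qed
qed

lemma alg_eq:
  fixes fn fi f1 r A B e l M Nr :: real
  assumes "fi > 0" "f1 > 0" "M > 0" "Nr = 2 * M" "Nr > 1" "e > 0" "l > 0"
  shows "(fn / (Nr * f1) * r / fi) * (A / M) * (B / M)
       = 1 / (e * l) * (fn / (fi * f1)) * (4 * A / (Nr * (Nr - 1)))
         * (r * B * (Nr - 1) * e * l / Nr^2)"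
  using assms by (simp add: field_simps power2_eq_square)

theorem lemma21:
  fixes n i1 :: nat and \<alpha>1 \<alpha>2 \<alpha>3 :: real
  assumes "n \<ge> 4"
    and "0 < \<alpha>2" "\<alpha>2 < 1" "0 < \<alpha>3" "\<alpha>3 < 1"
    and "\<alpha>1 = 1 - \<alpha>2 - \<alpha>3"
    and "i1 \<le> n - 4" and "even (n - i1)"
  shows "\<bar>lagr n (i1, (n - i1) div 2, (n - i1) div 2)
            ((real n - 1 + \<alpha>1) / real n, \<alpha>2 / real n, \<alpha>3 / real n)\<bar>
         \<le> 1 / (exp 1 * (ln (real n) - 1))
           * (Gamma (real n + 1) / (fact i1 * Gamma (real n - real i1)))
           * (4 * \<alpha>2 * (1 - \<alpha>2) / ((real n - real i1) * (real n - real i1 - 1)))"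
proof -
  define N where "N = n - i1"
  define m where "m = N div 2"
  define s where "s = \<alpha>2 + \<alpha>3"
  have N4: "4 \<le> N" and nN: "n = N + i1" unfolding N_def using assms by auto
  have Nm: "N = 2 * m" unfolding m_def using assms(8) N_def by auto
  have m2: "2 \<le> m" using N4 Nm by simp
  have npos: "real n > 0" using assms by simp
  have x1: "real n * ((real n - 1 + \<alpha>1) / real n) = real n - s"
    using npos unfolding s_def assms(6) by (simp add: field_simps)
  have x2: "real n * (\<alpha>2 / real n) = \<alpha>2" "real n * (\<alpha>3 / real n) = \<alpha>3" using npos by auto
  define P where "P = (\<Prod>t<i1. real (N + i1) - s - real t)"
  define r where "r = ((real N + 1) / (real (N + i1) + 1)) powr \<alpha>3"
  have PB: "0 \<le> P" "P \<le> fact (N + i1) / fact N * r"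
    using Abound[of N \<alpha>3 s i1] N4 assms unfolding P_def r_def s_def by auto
  have lag: "lagr n (i1, (n - i1) div 2, (n - i1) div 2)
            ((real n - 1 + \<alpha>1) / real n, \<alpha>2 / real n, \<alpha>3 / real n)
       = (P / fact i1) * lfac m \<alpha>2 * lfac m \<alpha>3"
  proof -
    have e: "(n - i1) div 2 = m" "N + i1 = n" using nN unfolding m_def N_def by auto
    show ?thesis unfolding lagr_def prod.case x1 x2 P_def e
      by (simp add: lfac_def)
  qed
  have l2: "\<bar>lfac m \<alpha>2\<bar> \<le> \<alpha>2 * (1 - \<alpha>2) / real m" by (rule lfac_small) (use assms m2 in auto)
  have l3: "\<bar>lfac m \<alpha>3\<bar> \<le> \<alpha>3 * (1 - \<alpha>3) / real m" by (rule lfac_small) (use assms m2 in auto)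
  have g1: "Gamma (real n + 1) = fact n" using Gamma_fact[of n] by (simp add: add.commute)
  have g2: "Gamma (real n - real i1) = fact (N - 1)"
  proof -
    have "real n - real i1 = 1 + real (N - 1)" using N4 nN by simp
    thus ?thesis using Gamma_fact[of "N - 1"] by simp
  qed
  have fN: "fact N = real N * fact (N - 1)" using N4 by (cases N) auto
  have d: "real n - real i1 = real N" using nN by simp
  have ln1: "ln (real n) - 1 > 0"
  proof -
    have "exp 1 < real n" using exp_le assms(1) by simp
    hence "ln (exp 1) < ln (real n)" using npos by (subst ln_less_cancel_iff) auto
    thus ?thesis by simp
  qed
  have "\<bar>(P / fact i1) * lfac m \<alpha>2 * lfac m \<alpha>3\<bar>
      \<le> (fact n / fact N * r / fact i1) * (\<alpha>2 * (1 - \<alpha>2) / real m) * (\<alpha>3 * (1 - \<alpha>3) / real m)"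
  proof -
    have r0: "0 \<le> r" unfolding r_def by simp
    have pA: "\<bar>P / fact i1\<bar> \<le> fact n / fact N * r / fact i1"
    proof -
      have "P / fact i1 \<le> fact n / fact N * r / fact i1"
        using PB nN by (intro divide_right_mono) auto
      thus ?thesis using PB by simp
    qed
    have B0: "0 \<le> fact n / fact N * r / fact i1" using r0 by simp
    have a0: "0 \<le> \<alpha>2 * (1 - \<alpha>2) / real m" using assms by simp
    show ?thesis unfolding abs_mult
      by (rule mult_mono[OF mult_mono[OF pA l2 B0 abs_ge_zero] l3 _ abs_ge_zero]) (use mult_nonneg_nonneg[OF B0 a0] in simp)
  qed
  also have "\<dots> = 1 / (exp 1 * (ln (real n) - 1))
           * (Gamma (real n + 1) / (fact i1 * Gamma (real n - real i1)))
           * (4 * \<alpha>2 * (1 - \<alpha>2) / ((real n - real i1) * (real n - real i1 - 1)))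
           * (r * (\<alpha>3 * (1 - \<alpha>3)) * (real N - 1) * exp 1 * (ln (real n) - 1) / (real N)^2)"
  proof -
    have "real N = 2 * real m" using Nm by simp
    moreover have "4 * \<alpha>2 * (1 - \<alpha>2) = 4 * (\<alpha>2 * (1 - \<alpha>2))" by simp
    moreover have g2': "Gamma (real N) = fact (N - 1)" using g2 d by simp
    ultimately show ?thesis unfolding d g1 g2' fN using ln1 N4 m2
      alg_eq[of "fact i1" "fact (N - 1)" "real m" "real N" "exp 1" "ln (real n) - 1" "fact n" r
        "\<alpha>2 * (1 - \<alpha>2)" "\<alpha>3 * (1 - \<alpha>3)"]
      by (simp add: mult.assoc)
  qed
  also have "\<dots> \<le> 1 / (exp 1 * (ln (real n) - 1))
           * (Gamma (real n + 1) / (fact i1 * Gamma (real n - real i1)))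
           * (4 * \<alpha>2 * (1 - \<alpha>2) / ((real n - real i1) * (real n - real i1 - 1))) * 1"
  proof (rule mult_left_mono)
    show "r * (\<alpha>3 * (1 - \<alpha>3)) * (real N - 1) * exp 1 * (ln (real n) - 1) / (real N)^2 \<le> 1"
      using key[of N n \<alpha>3] N4 nN assms unfolding r_def by simp
    show "0 \<le> 1 / (exp 1 * (ln (real n) - 1))
           * (Gamma (real n + 1) / (fact i1 * Gamma (real n - real i1)))
           * (4 * \<alpha>2 * (1 - \<alpha>2) / ((real n - real i1) * (real n - real i1 - 1)))"
      unfolding g1 g2 d using ln1 N4 assms
      by (intro mult_nonneg_nonneg divide_nonneg_nonneg) auto
  qed
  finally show ?thesis using lag by simp
qed

end
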